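(* Under the standing setting below, suppose $\Omega=\mathcal{T}^{-1}(0)\neq\emptyset$, and let $\{z^k\}$ be any sequence generated by $z^{k+1}\approx\mathcal{P}_k(z^k)$ satisfying criterion (A): $\|z^{k+1}-\mathcal{P}_k(z^k)\|_{\mathcal{M}_k}\le\epsilon_k$ with $\epsilon_k\ge0$ and $\sum_{k=0}^\infty\epsilon_k<\infty$. Then $\{z^k\}$ is bounded, \[\mathrm{dist}_{\mathcal{M}_{k+1}}(z^{k+1},\Omega)\le(1+\nu_k)\,\mathrm{dist}_{\mathcal{M}_k}(z^k,\Omega)+(1+\nu_k)\epsilon_k\quad\forall k\ge0,\] and $\{z^k\}$ converges to a point $z^\infty$ with $0\in\mathcal{T}(z^\infty)$.
   Context: Standing setting: $\mathcal{X}$ is a finite-dimensional real Hilbert space, $\mathcal{T}:\mathcal{X}\rightrightarrows\mathcal{X}$ is maximal monotone. $\{c_k\}$ is a sequence of positive reals bounded away from zero. $\{\mathcal{M}_k\}$ are self-adjoint positive definite linear operators on $\mathcal{X}$ satisfying $(1+\nu_k)\mathcal{M}_k\succeq\mathcal{M}_{k+1}$, $\mathcal{M}_k\succeq\lambda_{\min}\mathcal{I}$ for all $k\ge0$, and $\limsup_{k\to\infty}\lambda_{\max}(\mathcal{M}_k)=\lambda_\infty$, where $\{\nu_k\}$ is a nonnegative summable sequence and $+\infty>\lambda_\infty\ge\lambda_{\min}>0$. $\mathcal{P}_k:=(\mathcal{M}_k+c_k\mathcal{T})^{-1}\mathcal{M}_k$ (single-valued). For a self-adjoint positive definite $\mathcal{M}$,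 $\|x\|_{\mathcal{M}}=\sqrt{\langle x,\mathcal{M}x\rangle}$ and $\mathrm{dist}_{\mathcal{M}}(x,D)=\inf_{x'\in D}\|x-x'\|_{\mathcal{M}}$. *)

theory Defs
  imports "HOL-Analysis.Analysis"
begin

text \<open>Set-valued operators on a finite-dimensional real Hilbert space
  (modelled by a type of class euclidean_space) are functions into sets.\<close>

definition monotone_op :: "('a::real_inner \<Rightarrow> 'a set) \<Rightarrow> bool" where
  "monotone_op T \<longleftrightarrow>
     (\<forall>x y u v. u \<in> T x \<longrightarrow> v \<in> T y \<longrightarrow> 0 \<le> (x - y) \<bullet> (u - v))"

definition maximal_monotone :: "('a::real_inner \<Rightarrow> 'a set) \<Rightarrow> bool" where
  "maximal_monotone T \<longleftrightarrow> monotone_op T \<and>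
     (\<forall>x u. (\<forall>y v. v \<in> T y \<longrightarrow> 0 \<le> (x - y) \<bullet> (u - v)) \<longrightarrow> u \<in> T x)"

definition self_adjoint_pd :: "('a::real_inner \<Rightarrow> 'a) \<Rightarrow> bool" where
  "self_adjoint_pd M \<longleftrightarrow> linear M \<and> (\<forall>x y. M x \<bullet> y = x \<bullet> M y) \<and>
     (\<forall>x. x \<noteq> 0 \<longrightarrow> 0 < x \<bullet> M x)"

definition loewner_ge :: "('a::real_inner \<Rightarrow> 'a) \<Rightarrow> ('a \<Rightarrow> 'a) \<Rightarrow> bool" where
  "loewner_ge A B \<longleftrightarrow> (\<forall>x. x \<bullet> B x \<le> x \<bullet> A x)"

definition lambda_max :: "('a::real_inner \<Rightarrow> 'a) \<Rightarrow> real" where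
  "lambda_max M = Sup {x \<bullet> M x | x. norm x = 1}"

definition Mnorm :: "('a::real_inner \<Rightarrow> 'a) \<Rightarrow> 'a \<Rightarrow> real" where
  "Mnorm M x = sqrt (x \<bullet> M x)"

definition Mdist :: "('a::real_inner \<Rightarrow> 'a) \<Rightarrow> 'a \<Rightarrow> 'a set \<Rightarrow> real" where
  "Mdist M x D = Inf {Mnorm M (x - x') | x'. x' \<in> D}"

text \<open>P = (M + c T)^{-1} M, single-valued: P z is the unique w with
  M z \<in> M w + c T w.\<close>

definition prox_op :: "('a::real_inner \<Rightarrow> 'a) \<Rightarrow> real \<Rightarrow> ('a \<Rightarrow> 'a set) \<Rightarrow> 'a \<Rightarrow> 'a" where
  "prox_op M c T z = (THE w. \<exists>v \<in> T w. M z = M w + c *\<^sub>R v)"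

end

theory Submission
  imports Defs
begin

lemma df_sum:
  fixes F :: "('a::euclidean_space \<times> 'a) set"
  assumes fin: "finite F"
    and mono: "\<And>p q. p \<in> F \<Longrightarrow> q \<in> F \<Longrightarrow> 0 \<le> (fst p - fst q) \<bullet> (snd p - snd q)"
    and bnn: "\<And>p. p \<in> F \<Longrightarrow> 0 \<le> b p" and bs: "(\<Sum>p\<in>F. b p) = 1"
    and x: "x = (\<Sum>q\<in>F. b q *\<^sub>R fst q)"
  shows "0 \<le> (\<Sum>p\<in>F. b p * ((fst p - x) \<bullet> (snd p - y)))"
proof -
  have e1: "(\<Sum>p\<in>F. b p * ((fst p - x) \<bullet> (snd p - y)))
     = (\<Sum>p\<in>F. b p * ((fst p - x) \<bullet> snd p)) - (\<Sum>p\<in>F. b p *\<^sub>R (fst p - x)) \<bullet> y"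
    by (simp add: inner_diff_right sum_subtractf right_diff_distrib inner_sum_left)
  have "(\<Sum>p\<in>F. b p *\<^sub>R (fst p - x)) = x - (\<Sum>p\<in>F. b p) *\<^sub>R x"
    by (simp add: x scaleR_diff_right sum_subtractf scaleR_sum_left)
  then have e2: "(\<Sum>p\<in>F. b p *\<^sub>R (fst p - x)) = 0" using bs by simp
  have fx: "fst p - x = (\<Sum>q\<in>F. b q *\<^sub>R (fst p - fst q))" for p
    by (simp add: x scaleR_diff_right sum_subtractf flip: scaleR_sum_left, simp add: bs)
  define S where "S = (\<Sum>p\<in>F. \<Sum>q\<in>F. b p * b q * ((fst p - fst q) \<bullet> snd p))"
  have e3: "(\<Sum>p\<in>F. b p * ((fst p - x) \<bullet> snd p)) = S"
    unfolding S_def fx by (simp add: inner_sum_left sum_distrib_left mult.assoc)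
  have "S = (\<Sum>q\<in>F. \<Sum>p\<in>F. b p * b q * ((fst p - fst q) \<bullet> snd p))"
    unfolding S_def by (rule sum.swap)
  also have "\<dots> = (\<Sum>p\<in>F. \<Sum>q\<in>F. b p * b q * ((fst q - fst p) \<bullet> snd q))"
    by (simp add: mult.commute)
  finally have "2 * S = (\<Sum>p\<in>F. \<Sum>q\<in>F. b p * b q * ((fst p - fst q) \<bullet> snd p))
       + (\<Sum>p\<in>F. \<Sum>q\<in>F. b p * b q * ((fst q - fst p) \<bullet> snd q))" unfolding S_def by simp
  also have "\<dots> = (\<Sum>p\<in>F. \<Sum>q\<in>F. b p * b q * ((fst p - fst q) \<bullet> (snd p - snd q)))"
    by (simp add: sum.distrib[symmetric] inner_diff_right inner_diff_left algebra_simps)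
  also have "\<dots> \<ge> 0"
    by (intro sum_nonneg mult_nonneg_nonneg mono bnn)
  finally show ?thesis using e1 e2 e3 by simp
qed

lemma debrunner_flor:
  fixes F :: "('a::euclidean_space \<times> 'a) set" and phi :: "'a \<Rightarrow> 'a"
  assumes fin: "finite F" and ne: "F \<noteq> {}"
    and mono: "\<And>p q. p \<in> F \<Longrightarrow> q \<in> F \<Longrightarrow> 0 \<le> (fst p - fst q) \<bullet> (snd p - snd q)"
    and cont: "continuous_on UNIV phi"
  shows "\<exists>x. \<forall>p\<in>F. 0 \<le> (fst p - x) \<bullet> (snd p - phi x)"
proof (rule ccontr)
  assume "\<not> ?thesis"
  then have bad: "\<forall>x. \<exists>p\<in>F. (fst p - x) \<bullet> (snd p - phi x) < 0" by (simp add: not_le)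
  define h where "h p x = (fst p - x) \<bullet> (snd p - phi x)" for p x
  define g where "g p x = max 0 (- h p x)" for p x
  define G where "G x = (\<Sum>p\<in>F. g p x)" for x
  have gnn: "0 \<le> g p x" for p x by (simp add: g_def)
  have Gpos: "0 < G x" for x
  proof -
    obtain p where "p \<in> F" "h p x < 0" using bad unfolding h_def by blast
    then have "0 < g p x" by (simp add: g_def)
    then show ?thesis unfolding G_def using fin \<open>p \<in> F\<close>
      by (intro sum_pos2[where i=p]) (auto simp: gnn)
  qed
  define C where "C = convex hull (fst ` F)"
  define f where "f x = (\<Sum>p\<in>F. (g p x / G x) *\<^sub>R fst p)" for x
  have wsum: "(\<Sum>p\<in>F. g p x / G x) = 1" for x
    using Gpos[of x] by (simp add: G_def flip: sum_divide_distrib)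
  have contg: "continuous_on UNIV (g p)" for p
    unfolding g_def h_def by (intro continuous_intros cont)
  have contG: "continuous_on UNIV G"
    unfolding G_def by (intro continuous_on_sum contg)
  have contf: "continuous_on C f"
    unfolding f_def
  proof (intro continuous_on_sum)
    fix p show "continuous_on C (\<lambda>x. (g p x / G x) *\<^sub>R fst p)"
      by (intro continuous_on_scaleR continuous_on_const continuous_on_divide
          continuous_on_subset[OF contg] continuous_on_subset[OF contG])
         (auto simp: Gpos less_imp_neq[symmetric])
  qed
  have fim: "f \<in> C \<rightarrow> C"
  proof
    fix x assume "x \<in> C"
    show "f x \<in> C" unfolding f_def C_def
      apply (rule convex_sum[OF fin convex_convex_hull wsum])
      using Gpos[of x] gnn[of _ x]
       apply simp
      by (simp add: hull_inc)
  qed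
  have "compact C" unfolding C_def by (intro compact_convex_hull finite_imp_compact finite_imageI fin)
  moreover have "convex C" "C \<noteq> {}" using ne by (auto simp: C_def)
  ultimately obtain x0 where "x0 \<in> C" "f x0 = x0" using brouwer[OF _ _ _ contf fim] by blast
  have "0 \<le> (\<Sum>p\<in>F. (g p x0 / G x0) * ((fst p - x0) \<bullet> (snd p - phi x0)))"
    apply (rule df_sum[OF fin mono])
    using Gpos[of x0] gnn[of _ x0] wsum[of x0] \<open>f x0 = x0\<close>
    by (simp_all add: f_def)
  then have "0 \<le> (\<Sum>p\<in>F. g p x0 * h p x0) / G x0"
    by (simp add: sum_divide_distrib h_def)
  then have A: "0 \<le> (\<Sum>p\<in>F. g p x0 * h p x0)" using Gpos[of x0]
    by (simp add: zero_le_divide_iff)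
  have gh: "g p x * h p x = - ((g p x)\<^sup>2)" for p x
    by (auto simp: g_def max_def power2_eq_square)
  obtain p where p: "p \<in> F" "h p x0 < 0" using bad unfolding h_def by blast
  have "(\<Sum>p\<in>F. g p x0 * h p x0) < 0"
    unfolding gh sum_negf
  proof -
    have "0 < g p x0" using p by (simp add: g_def)
    then have "0 < (\<Sum>p\<in>F. (g p x0)\<^sup>2)"
      using fin p by (intro sum_pos2[where i=p]) auto
    then show "- (\<Sum>p\<in>F. (g p x0)\<^sup>2) < 0" by simp
  qed
  with A show False by simp
qed

lemma sapd_linear: "self_adjoint_pd M \<Longrightarrow> linear M"
  by (simp add: self_adjoint_pd_def)

lemma sapd_sym: "self_adjoint_pd M \<Longrightarrow> M x \<bullet> y = x \<bullet> M y"
  by (simp add: self_adjoint_pd_def)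

lemma sapd_pos: "self_adjoint_pd M \<Longrightarrow> x \<noteq> 0 \<Longrightarrow> 0 < x \<bullet> M x"
  by (simp add: self_adjoint_pd_def)

lemma sapd_nonneg: "self_adjoint_pd M \<Longrightarrow> 0 \<le> x \<bullet> M x"
  using sapd_pos[of M x] by (cases "x = 0") (auto simp: linear_0 sapd_linear)

lemma sapd_cont:
  fixes M :: "'a::euclidean_space \<Rightarrow> 'a"
  shows "self_adjoint_pd M \<Longrightarrow> continuous_on S M"
  by (intro linear_continuous_on linear_conv_bounded_linear[THEN iffD1] sapd_linear)

lemma mm_nonempty:
  assumes "maximal_monotone T" shows "\<exists>y v. v \<in> T y"
proof (rule ccontr)
  assume "\<not> ?thesis"
  then have "\<forall>y v. v \<in> T y \<longrightarrow> 0 \<le> (0 - y) \<bullet> (0 - v)" by auto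
  with assms have "0 \<in> T 0" unfolding maximal_monotone_def by blast
  with \<open>\<not> ?thesis\<close> show False by auto
qed

lemma resolvent_exists:
  fixes T :: "'a::euclidean_space \<Rightarrow> 'a set" and M :: "'a \<Rightarrow> 'a"
  assumes mm: "maximal_monotone T" and sa: "self_adjoint_pd M" and c: "0 < c"
    and lb: "\<And>x. lam * (x \<bullet> x) \<le> x \<bullet> M x" and lam: "0 < lam"
  shows "\<exists>w. \<exists>v\<in>T w. M z = M w + c *\<^sub>R v"
proof -
  have lin: "linear M" using sa by (rule sapd_linear)
  define phi where "phi w = (1/c) *\<^sub>R (M z - M w)" for w
  have contphi: "continuous_on UNIV phi"
    unfolding phi_def by (intro continuous_intros sapd_cont[OF sa])
  define S where "S p = {w. 0 \<le> (fst p - w) \<bullet> (snd p - phi w)}" for p :: "'a \<times> 'a"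
  define G where "G = {p. snd p \<in> T (fst p)}"
  have mono: "\<And>p q. p \<in> G \<Longrightarrow> q \<in> G \<Longrightarrow> 0 \<le> (fst p - fst q) \<bullet> (snd p - snd q)"
    using mm unfolding maximal_monotone_def monotone_op_def G_def by blast
  obtain p0 where p0: "p0 \<in> G" using mm_nonempty[OF mm] unfolding G_def by auto
  have closedS: "closed (S p)" for p
    unfolding S_def
    by (intro closed_Collect_le continuous_intros continuous_on_subset[OF contphi]) auto
  have boundedS: "bounded (S p)" for p
  proof -
    define R where "R = (c * norm (snd p) + norm (M z - M (fst p))) / lam"
    have "S p \<subseteq> cball (fst p) R"
    proof
      fix w assume "w \<in> S p"
      then have h: "0 \<le> (fst p - w) \<bullet> (snd p - phi w)" by (simp add: S_def)
      define d where "d = w - fst p"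
      have "M z - M w = (M z - M (fst p)) - M d"
        by (simp add: d_def linear_diff[OF lin])
      then have "c *\<^sub>R phi w = (M z - M (fst p)) - M d" using c by (simp add: phi_def)
      have "0 \<le> c * ((fst p - w) \<bullet> (snd p - phi w))" using h c by simp
      also have "\<dots> = - c * (d \<bullet> snd p) + d \<bullet> (c *\<^sub>R phi w)"
        by (simp add: d_def inner_diff_left inner_diff_right algebra_simps)
      also have "\<dots> = - c * (d \<bullet> snd p) + d \<bullet> (M z - M (fst p)) - d \<bullet> M d"
        using \<open>c *\<^sub>R phi w = _\<close> by (simp add: inner_diff_right)
      finally have "d \<bullet> M d \<le> - c * (d \<bullet> snd p) + d \<bullet> (M z - M (fst p))" by simp
      also have "\<dots> \<le> norm d * (c * norm (snd p) + norm (M z - M (fst p)))"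
      proof -
        have "- c * (d \<bullet> snd p) \<le> c * (norm d * norm (snd p))"
        proof -
          have "- (d \<bullet> snd p) \<le> norm d * norm (snd p)"
            using Cauchy_Schwarz_ineq2[of d "snd p"] by (simp add: abs_le_iff)
          from mult_left_mono[OF this, of c] c show ?thesis by simp
        qed
        moreover have "d \<bullet> (M z - M (fst p)) \<le> norm d * norm (M z - M (fst p))"
          by (rule norm_cauchy_schwarz)
        ultimately show ?thesis by (simp add: algebra_simps)
      qed
      finally have A: "lam * (norm d)^2 \<le> norm d * (c * norm (snd p) + norm (M z - M (fst p)))"
        using lb[of d] by (simp add: power2_norm_eq_inner)
      have "norm d \<le> R"
      proof (cases "norm d = 0")
        case True then show ?thesis using c lam by (simp add: R_def)
      next
        case False
        then have "lam * norm d \<le> c * norm (snd p) + norm (M z - M (fst p))"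
          using A by (simp add: power2_eq_square)
        then show ?thesis using lam by (simp add: R_def pos_le_divide_eq mult.commute)
      qed
      then show "w \<in> cball (fst p) R" by (simp add: d_def dist_norm norm_minus_commute)
    qed
    then show ?thesis using bounded_cball bounded_subset by blast
  qed
  have "\<Inter>(S ` G) \<noteq> {}"
  proof (rule compact_fip_Heine_Borel)
    show "compact K" if "K \<in> S ` G" for K
      using that closedS boundedS by (auto simp: compact_eq_bounded_closed)
  next
    fix F' assume "finite F'" "F' \<subseteq> S ` G"
    then obtain G' where G': "G' \<subseteq> G" "finite G'" "F' = S ` G'"
      by (metis finite_subset_image)
    have "\<exists>x. \<forall>p\<in>insert p0 G'. 0 \<le> (fst p - x) \<bullet> (snd p - phi x)"
      using G' p0 by (intro debrunner_flor contphi) (auto intro!: mono)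
    then obtain x where "\<forall>p\<in>insert p0 G'. 0 \<le> (fst p - x) \<bullet> (snd p - phi x)" by blast
    then have "x \<in> \<Inter>F'" using G' by (auto simp: S_def)
    then show "\<Inter>F' \<noteq> {}" by blast
  qed
  then obtain w where w: "\<And>p. p \<in> G \<Longrightarrow> w \<in> S p" by blast
  have "\<forall>y v. v \<in> T y \<longrightarrow> 0 \<le> (w - y) \<bullet> (phi w - v)"
  proof (intro allI impI)
    fix y v assume "v \<in> T y"
    then have "w \<in> S (y, v)" using w by (simp add: G_def)
    then show "0 \<le> (w - y) \<bullet> (phi w - v)"
      by (simp add: S_def inner_commute) (metis inner_minus_left inner_minus_right minus_diff_eq)
  qed
  then have "phi w \<in> T w" using mm unfolding maximal_monotone_def by blast
  moreover have "M z = M w + c *\<^sub>R phi w" using c by (simp add: phi_def)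
  ultimately show ?thesis by blast
qed

lemma resolvent_unique:
  fixes T :: "'a::euclidean_space \<Rightarrow> 'a set"
  assumes mm: "maximal_monotone T" and sa: "self_adjoint_pd M" and c: "0 < c"
    and v1: "v1 \<in> T w1" and v2: "v2 \<in> T w2" and eq: "M w1 + c *\<^sub>R v1 = M w2 + c *\<^sub>R v2"
  shows "w1 = w2"
proof (rule ccontr)
  assume ne: "w1 \<noteq> w2"
  have lin: "linear M" using sa by (rule sapd_linear)
  have "0 \<le> (w1 - w2) \<bullet> (v1 - v2)"
    using mm v1 v2 unfolding maximal_monotone_def monotone_op_def by blast
  then have "0 \<le> (w1 - w2) \<bullet> (c *\<^sub>R (v1 - v2))" using c by simp
  also have "c *\<^sub>R (v1 - v2) = - M (w1 - w2)"
    using eq by (simp add: linear_diff[OF lin] scaleR_diff_right algebra_simps)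
  finally have "(w1 - w2) \<bullet> M (w1 - w2) \<le> 0" by simp
  moreover have "0 < (w1 - w2) \<bullet> M (w1 - w2)" using ne sapd_pos[OF sa] by simp
  ultimately show False by simp
qed

lemma prox_prop:
  fixes T :: "'a::euclidean_space \<Rightarrow> 'a set" and M :: "'a \<Rightarrow> 'a"
  assumes mm: "maximal_monotone T" and sa: "self_adjoint_pd M" and c: "0 < c"
    and lb: "\<And>x. lam * (x \<bullet> x) \<le> x \<bullet> M x" and lam: "0 < lam"
  shows "\<exists>v\<in>T (prox_op M c T z). M z = M (prox_op M c T z) + c *\<^sub>R v"
proof -
  have "\<exists>!w. \<exists>v\<in>T w. M z = M w + c *\<^sub>R v"
  proof (rule ex_ex1I)
    show "\<exists>w. \<exists>v\<in>T w. M z = M w + c *\<^sub>R v" by (rule resolvent_exists[OF mm sa c lb lam])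
  next
    fix w1 w2 assume "\<exists>v\<in>T w1. M z = M w1 + c *\<^sub>R v" "\<exists>v\<in>T w2. M z = M w2 + c *\<^sub>R v"
    then show "w1 = w2" using resolvent_unique[OF mm sa c] by metis
  qed
  then show ?thesis unfolding prox_op_def by (rule theI')
qed

lemma qf_add: "self_adjoint_pd M \<Longrightarrow> (a + b) \<bullet> M (a + b) = a \<bullet> M a + 2 * (a \<bullet> M b) + b \<bullet> M b"
  using sapd_sym[of M b a]
  by (simp add: linear_add[OF sapd_linear] inner_add_left inner_add_right inner_commute)

lemma qf_scale: "self_adjoint_pd M \<Longrightarrow> (t *\<^sub>R a) \<bullet> M (t *\<^sub>R b) = t * t * (a \<bullet> M b)"
  by (simp add: linear_scale[OF sapd_linear])

lemma qf_CS:
  assumes sa: "self_adjoint_pd M" shows "(x \<bullet> M y)^2 \<le> (x \<bullet> M x) * (y \<bullet> M y)"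
proof (cases "y = 0")
  case True then show ?thesis by (simp add: linear_0[OF sapd_linear[OF sa]])
next
  case False
  define a where "a = y \<bullet> M y"
  have a: "0 < a" using sapd_pos[OF sa False] by (simp add: a_def)
  define t where "t = (x \<bullet> M y) / a"
  have "0 \<le> (x + (-t) *\<^sub>R y) \<bullet> M (x + (-t) *\<^sub>R y)" by (rule sapd_nonneg[OF sa])
  also have "\<dots> = x \<bullet> M x - 2 * t * (x \<bullet> M y) + t * t * a"
    using qf_add[OF sa, of x "(-t) *\<^sub>R y"] qf_scale[OF sa, of "-t" y y]
    by (simp add: linear_scale[OF sapd_linear[OF sa]] linear_neg[OF sapd_linear[OF sa]] a_def)
  also have "\<dots> = x \<bullet> M x - (x \<bullet> M y)^2 / a"
    using a by (simp add: t_def field_simps power2_eq_square)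
  finally have "(x \<bullet> M y)^2 / a \<le> x \<bullet> M x" by simp
  then show ?thesis using a by (simp add: a_def[symmetric] pos_divide_le_eq mult.commute)
qed

lemma Mnorm_nonneg: "self_adjoint_pd M \<Longrightarrow> 0 \<le> Mnorm M x" by (simp add: Mnorm_def sapd_nonneg)

lemma Mnorm_sq: assumes "self_adjoint_pd M" shows "(Mnorm M x)^2 = x \<bullet> M x"
  using sapd_nonneg[OF assms, of x] by (simp add: Mnorm_def)

lemma Mnorm_triangle:
  assumes sa: "self_adjoint_pd M" shows "Mnorm M (a + b) \<le> Mnorm M a + Mnorm M b"
proof -
  have h1: "(a \<bullet> M b)^2 \<le> (Mnorm M a * Mnorm M b)^2"
    using qf_CS[OF sa, of a b] by (simp add: power_mult_distrib Mnorm_sq[OF sa])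
  then have "a \<bullet> M b \<le> Mnorm M a * Mnorm M b"
  proof -
    have "\<bar>a \<bullet> M b\<bar> \<le> \<bar>Mnorm M a * Mnorm M b\<bar>" using h1 by (rule abs_le_square_iff[THEN iffD2])
    then show ?thesis by (simp add: Mnorm_nonneg[OF sa])
  qed
  then have "(a + b) \<bullet> M (a + b) \<le> (Mnorm M a + Mnorm M b)^2"
    using qf_add[OF sa, of a b] unfolding power2_sum Mnorm_sq[OF sa] by linarith
  then show ?thesis unfolding Mnorm_def
    by (intro real_le_lsqrt) (simp_all add: sapd_nonneg[OF sa] add_nonneg_nonneg)
qed

lemma Mnorm_diff_triangle:
  assumes sa: "self_adjoint_pd M" shows "Mnorm M (a - c) \<le> Mnorm M (a - b) + Mnorm M (b - c)"
  using Mnorm_triangle[OF sa, of "a - b" "b - c"] by simp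

lemma quasi_fejer:
  fixes a nu b :: "nat \<Rightarrow> real"
  assumes a0: "\<And>k. 0 \<le> a k" and nu0: "\<And>k. 0 \<le> nu k" and nus: "summable nu"
    and b0: "\<And>k. 0 \<le> b k" and bs: "summable b"
    and rec: "\<And>k. a (Suc k) \<le> (1 + nu k) * a k + b k"
  shows "convergent a"
proof -
  define P where "P k = (\<Prod>j<k. 1 + nu j)" for k
  have P1: "1 \<le> P k" for k unfolding P_def
  proof (induction k)
    case (Suc k)
    have "1 * 1 \<le> (\<Prod>j<k. 1 + nu j) * (1 + nu k)"
      using Suc nu0[of k] by (intro mult_mono) auto
    then show ?case by simp
  qed simp
  have Pinc: "incseq P"
  proof (rule incseq_SucI)
    fix k have "P k * 1 \<le> P k * (1 + nu k)" using P1[of k] nu0[of k] by (intro mult_left_mono) auto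
    then show "P k \<le> P (Suc k)" by (simp add: P_def)
  qed
  have Pb: "P k \<le> exp (suminf nu)" for k
  proof -
    have "P k \<le> (\<Prod>j<k. exp (nu j))" unfolding P_def
      by (intro prod_mono) (auto simp: nu0 add_nonneg_nonneg)
    also have "\<dots> = exp (\<Sum>j<k. nu j)" by (simp add: exp_sum)
    also have "\<dots> \<le> exp (suminf nu)" using sum_le_suminf[OF nus, of "{..<k}"] nu0 by simp
    finally show ?thesis .
  qed
  obtain LP where LP: "P \<longlonglongrightarrow> LP" using incseq_convergent[OF Pinc] Pb by blast
  define a' where "a' k = a k / P k" for k
  have Ppos: "0 < P k" for k using P1[of k] by simp
  have a'rec: "a' (Suc k) \<le> a' k + b k" for k
  proof -
    have "a' (Suc k) \<le> ((1 + nu k) * a k + b k) / P (Suc k)"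
      unfolding a'_def using rec[of k] Ppos[of "Suc k"] by (simp add: divide_right_mono)
    also have "\<dots> = a k / P k + b k / P (Suc k)"
    proof -
      have Ps: "P (Suc k) = P k * (1 + nu k)" by (simp add: P_def)
      have "(1 + nu k) * a k / P (Suc k) = a k / P k"
        unfolding Ps using nu0[of k] by simp
      then show ?thesis by (simp add: add_divide_distrib)
    qed
    also have "b k / P (Suc k) \<le> b k"
      using P1[of "Suc k"] b0[of k] by (simp add: divide_le_eq mult_le_cancel_left1 mult.commute)
    finally show ?thesis by (simp add: a'_def)
  qed
  define u where "u k = a' k - (\<Sum>j<k. b j)" for k
  have "decseq u" by (rule decseq_SucI) (simp add: u_def, smt (verit) a'rec)
  moreover have "- suminf b \<le> u k" for k
  proof -
    have "0 \<le> a k / P k" using a0[of k] Ppos[of k] by simp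
    then show ?thesis using sum_le_suminf[OF bs, of "{..<k}"] b0 by (simp add: u_def a'_def)
  qed
  ultimately obtain Lu where "u \<longlonglongrightarrow> Lu" using decseq_convergent by blast
  then have "convergent u" by (auto simp: convergent_def)
  moreover have "convergent (\<lambda>k. \<Sum>j<k. b j)" using bs by (simp add: summable_iff_convergent)
  ultimately have "convergent (\<lambda>k. u k + (\<Sum>j<k. b j))" by (rule convergent_add)
  then have "convergent a'" by (simp add: u_def)
  moreover have "convergent P" using LP by (auto simp: convergent_def)
  ultimately have "convergent (\<lambda>k. a' k * P k)" by (rule convergent_mult)
  moreover have "(\<lambda>k. a' k * P k) = a" using Ppos by (auto simp: a'_def fun_eq_iff less_imp_neq[symmetric])
  ultimately show ?thesis by simp
qed

lemma lmax_bound: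
  fixes M :: "'a::euclidean_space \<Rightarrow> 'a"
  assumes sa: "self_adjoint_pd M"
  shows "x \<bullet> M x \<le> lambda_max M * (x \<bullet> x)"
proof (cases "x = 0")
  case True then show ?thesis by (simp add: linear_0[OF sapd_linear[OF sa]])
next
  case False
  have bl: "bounded_linear M" using sapd_linear[OF sa] linear_conv_bounded_linear by blast
  then obtain K where K: "\<And>y. norm (M y) \<le> norm y * K" using bounded_linear.bounded by blast
  have bdd: "bdd_above {y \<bullet> M y | y. norm y = 1}"
  proof (rule bdd_aboveI)
    fix r assume "r \<in> {y \<bullet> M y | y. norm y = 1}"
    then obtain y where y: "norm y = 1" "r = y \<bullet> M y" by auto
    have "r \<le> norm y * norm (M y)" using y norm_cauchy_schwarz by metis
    also have "\<dots> \<le> K" using K[of y] y by simp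
    finally show "r \<le> K" .
  qed
  define y where "y = (1 / norm x) *\<^sub>R x"
  have "norm y = 1" using False by (simp add: y_def)
  then have "y \<bullet> M y \<le> lambda_max M" unfolding lambda_max_def
    by (intro cSup_upper bdd) auto
  moreover have "y \<bullet> M y = (x \<bullet> M x) / (x \<bullet> x)"
    unfolding y_def qf_scale[OF sa] using False
    by (simp add: power2_norm_eq_inner[symmetric] power2_eq_square)
  ultimately show ?thesis using False by (simp add: divide_le_eq)
qed

lemma Mx_bound:
  fixes M :: "'a::euclidean_space \<Rightarrow> 'a"
  assumes sa: "self_adjoint_pd M"
  shows "(norm (M x))^2 \<le> lambda_max M * (x \<bullet> M x)"
proof (cases "M x = 0")
  case True then show ?thesis
    using lmax_bound[OF sa, of x] sapd_nonneg[OF sa, of x]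
    by simp
next
  case False
  have e: "M x \<bullet> M x = x \<bullet> M (M x)" by (rule sapd_sym[OF sa])
  have "(M x \<bullet> M x)^2 \<le> (x \<bullet> M x) * (M x \<bullet> M (M x))"
    unfolding e by (rule qf_CS[OF sa])
  also have "\<dots> \<le> (x \<bullet> M x) * (lambda_max M * (M x \<bullet> M x))"
    by (intro mult_left_mono lmax_bound[OF sa] sapd_nonneg[OF sa])
  finally have "(M x \<bullet> M x) * (M x \<bullet> M x) \<le> (lambda_max M * (x \<bullet> M x)) * (M x \<bullet> M x)"
    by (simp add: power2_eq_square algebra_simps)
  then have "M x \<bullet> M x \<le> lambda_max M * (x \<bullet> M x)"
    using False by (simp add: mult_le_cancel_right)
  then show ?thesis by (simp add: power2_norm_eq_inner)
qed

theorem mainTheorem3: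
  fixes T :: "'a::euclidean_space \<Rightarrow> 'a set"
    and c :: "nat \<Rightarrow> real" and M :: "nat \<Rightarrow> 'a \<Rightarrow> 'a"
    and nu :: "nat \<Rightarrow> real" and lmin linf :: real
    and z :: "nat \<Rightarrow> 'a" and eps :: "nat \<Rightarrow> real"
  assumes T_mm: "maximal_monotone T"
    and c_pos: "\<And>k. 0 < c k"
    and c_away: "\<exists>cmin>0. \<forall>k. cmin \<le> c k"
    and M_sapd: "\<And>k. self_adjoint_pd (M k)"
    and M_var: "\<And>k. loewner_ge (\<lambda>x. (1 + nu k) *\<^sub>R M k x) (M (Suc k))"
    and M_lb: "\<And>k. loewner_ge (M k) (\<lambda>x. lmin *\<^sub>R x)"
    and M_limsup: "limsup (\<lambda>k. ereal (lambda_max (M k))) = ereal linf"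
    and nu_nonneg: "\<And>k. 0 \<le> nu k" and nu_summable: "summable nu"
    and lam: "lmin > 0" "linf \<ge> lmin"
    and Omega_ne: "{w. 0 \<in> T w} \<noteq> {}"
    and crit_A: "\<And>k. Mnorm (M k) (z (Suc k) - prox_op (M k) (c k) T (z k)) \<le> eps k"
    and eps_nonneg: "\<And>k. 0 \<le> eps k" and eps_summable: "summable eps"
  shows "bounded (range z) \<and>
         (\<forall>k. Mdist (M (Suc k)) (z (Suc k)) {w. 0 \<in> T w}
              \<le> (1 + nu k) * Mdist (M k) (z k) {w. 0 \<in> T w} + (1 + nu k) * eps k) \<and>
         (\<exists>zlim. z \<longlonglongrightarrow> zlim \<and> 0 \<in> T zlim)"
proof -
  define Om where "Om = {w. 0 \<in> T w}"
  define N where "N k x = Mnorm (M k) x" for k x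
  define q where "q k x = x \<bullet> M k x" for k x
  note sa = M_sapd
  have lb: "lmin * (x \<bullet> x) \<le> q k x" for k x
    using M_lb[of k] by (simp add: loewner_ge_def q_def)
  have q0: "0 \<le> q k x" for k x by (simp add: q_def sapd_nonneg[OF sa])
  have N0: "0 \<le> N k x" for k x by (simp add: N_def Mnorm_nonneg[OF sa])
  have Nsq: "(N k x)^2 = q k x" for k x by (simp add: N_def q_def Mnorm_sq[OF sa])
  have lin: "linear (M k)" for k using sa by (rule sapd_linear)
  define w where "w k = prox_op (M k) (c k) T (z k)" for k
  have "\<exists>v\<in>T (w k). M k (z k) = M k (w k) + c k *\<^sub>R v" for k
    unfolding w_def
    by (rule prox_prop[OF T_mm sa c_pos _ lam(1)]) (use lb in \<open>simp add: q_def\<close>)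
  then obtain v where v: "\<And>k. v k \<in> T (w k)" "\<And>k. M k (z k) = M k (w k) + c k *\<^sub>R v k"
    by metis
  have cv: "c k *\<^sub>R v k = M k (z k - w k)" for k
    using v(2)[of k] by (simp add: linear_diff[OF lin])
  have monoT: "\<And>x y u u'. u \<in> T x \<Longrightarrow> u' \<in> T y \<Longrightarrow> 0 \<le> (x - y) \<bullet> (u - u')"
    using T_mm unfolding maximal_monotone_def monotone_op_def by blast
  have F2: "N k (w k - s) \<le> N k (z k - s)" and F2': "q k (z k - w k) \<le> q k (z k - s) - q k (w k - s)"
    if s: "s \<in> Om" for k s
  proof -
    have "0 \<le> (w k - s) \<bullet> (v k - 0)" using monoT[OF v(1)[of k], of 0 s] s by (simp add: Om_def)
    then have "0 \<le> (w k - s) \<bullet> (c k *\<^sub>R v k)" using c_pos[of k] by simp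
    then have h: "0 \<le> (w k - s) \<bullet> M k (z k - w k)" by (simp add: cv)
    have "(z k - w k) \<bullet> M k (w k - s) = (w k - s) \<bullet> M k (z k - w k)"
      using sapd_sym[OF sa[of k], of "z k - w k" "w k - s"] by (simp add: inner_commute)
    then have e: "q k (z k - s) = q k (z k - w k) + 2 * ((w k - s) \<bullet> M k (z k - w k)) + q k (w k - s)"
      using qf_add[OF sa[of k], of "z k - w k" "w k - s"] by (simp add: q_def)
    show "q k (z k - w k) \<le> q k (z k - s) - q k (w k - s)" using e h by simp
    have "q k (w k - s) \<le> q k (z k - s)" using e h q0[of k "z k - w k"] by simp
    then show "N k (w k - s) \<le> N k (z k - s)" unfolding N_def Mnorm_def q_def by (rule real_sqrt_le_mono)
  qed
  have F3: "N (Suc k) x \<le> (1 + nu k) * N k x" for k x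
  proof -
    have "q (Suc k) x \<le> (1 + nu k) * q k x"
      using M_var[of k] by (simp add: loewner_ge_def q_def)
    also have "\<dots> \<le> (1 + nu k)^2 * q k x"
      using nu_nonneg[of k] q0[of k x] by (intro mult_right_mono) (auto simp: power2_eq_square)
    finally have "(N (Suc k) x)^2 \<le> ((1 + nu k) * N k x)^2"
      by (simp add: Nsq power_mult_distrib)
    moreover have "0 \<le> (1 + nu k) * N k x" using N0[of k x] nu_nonneg[of k] by simp
    ultimately show ?thesis by (rule power2_le_imp_le)
  qed
  have F4a: "N (Suc k) (z (Suc k) - s) \<le> (1 + nu k) * (N k (w k - s) + eps k)" for k s
  proof -
    have "N k (z (Suc k) - s) \<le> N k (z (Suc k) - w k) + N k (w k - s)"
      unfolding N_def by (rule Mnorm_diff_triangle[OF sa])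
    also have "\<dots> \<le> eps k + N k (w k - s)" using crit_A[of k] by (simp add: N_def w_def)
    finally have "N k (z (Suc k) - s) \<le> N k (w k - s) + eps k" by simp
    then have "(1 + nu k) * N k (z (Suc k) - s) \<le> (1 + nu k) * (N k (w k - s) + eps k)"
      using nu_nonneg[of k] by (intro mult_left_mono) auto
    with F3[of k] show ?thesis by (rule order_trans)
  qed
  have F4: "N (Suc k) (z (Suc k) - s) \<le> (1 + nu k) * N k (z k - s) + (1 + nu k) * eps k"
    if "s \<in> Om" for k s
  proof -
    have "(1 + nu k) * (N k (w k - s) + eps k) \<le> (1 + nu k) * (N k (z k - s) + eps k)"
      using nu_nonneg[of k] F2[OF that, of k] by (intro mult_left_mono) auto
    with F4a[of k s] have "N (Suc k) (z (Suc k) - s) \<le> (1 + nu k) * (N k (z k - s) + eps k)" by linarith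
    then show ?thesis by (simp add: distrib_left)
  qed
  obtain s0 where s0: "s0 \<in> Om" using Omega_ne by (auto simp: Om_def)
  have part2: "Mdist (M (Suc k)) (z (Suc k)) Om \<le> (1 + nu k) * Mdist (M k) (z k) Om + (1 + nu k) * eps k" for k
  proof -
    define D where "D j x = Mdist (M j) x Om" for j x
    have Dle: "D j x \<le> N j (x - s)" if "s \<in> Om" for j x s
      unfolding D_def Mdist_def N_def
    proof (rule cInf_lower)
      show "Mnorm (M j) (x - s) \<in> {Mnorm (M j) (x - x') |x'. x' \<in> Om}" using that by blast
      show "bdd_below {Mnorm (M j) (x - x') |x'. x' \<in> Om}"
        by (rule bdd_belowI[of _ 0]) (auto simp: Mnorm_nonneg[OF sa])
    qed
    have pos: "0 < 1 + nu k" using nu_nonneg[of k] by simp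
    have "(D (Suc k) (z (Suc k)) - (1 + nu k) * eps k) / (1 + nu k) \<le> D k (z k)"
      unfolding D_def[of k "z k"] Mdist_def
    proof (rule cInf_greatest)
      show "{Mnorm (M k) (z k - x') |x'. x' \<in> Om} \<noteq> {}" using s0 by blast
    next
      fix y assume "y \<in> {Mnorm (M k) (z k - x') |x'. x' \<in> Om}"
      then obtain s where s: "s \<in> Om" "y = N k (z k - s)" by (auto simp: N_def)
      have "D (Suc k) (z (Suc k)) \<le> (1 + nu k) * y + (1 + nu k) * eps k"
        using Dle[OF s(1)] F4[OF s(1), of k] s(2) by (metis order_trans)
      then show "(D (Suc k) (z (Suc k)) - (1 + nu k) * eps k) / (1 + nu k) \<le> y"
        using pos by (simp add: pos_divide_le_eq mult.commute)
    qed
    then show ?thesis using pos by (simp add: D_def pos_divide_le_eq mult.commute)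
  qed
  have bsum: "summable (\<lambda>k. (1 + nu k) * eps k)"
  proof (rule summable_comparison_test'[where N=0])
    show "summable (\<lambda>k. (1 + suminf nu) * eps k)" by (intro summable_mult eps_summable)
    fix k
    have "nu k \<le> suminf nu"
      using sum_le_suminf[OF nu_summable, of "{k}"] nu_nonneg by simp
    then have "(1 + nu k) * eps k \<le> (1 + suminf nu) * eps k"
      using eps_nonneg[of k] by (intro mult_right_mono) auto
    moreover have "0 \<le> (1 + nu k) * eps k" using nu_nonneg[of k] eps_nonneg[of k] by simp
    ultimately show "norm ((1 + nu k) * eps k) \<le> (1 + suminf nu) * eps k" by simp
  qed
  have dconv: "convergent (\<lambda>k. N k (z k - s))" if "s \<in> Om" for s
    by (rule quasi_fejer[OF N0 nu_nonneg nu_summable _ bsum F4[OF that]])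
       (simp add: eps_nonneg nu_nonneg add_nonneg_nonneg)
  have bdd: "bounded (range z)"
  proof -
    obtain K where K: "\<And>k. norm (N k (z k - s0)) \<le> K"
      using convergent_imp_Bseq[OF dconv[OF s0]] unfolding Bseq_def by blast
    have K0: "0 \<le> K" using K[of 0] norm_ge_zero order_trans by blast
    have "norm (z k - s0) \<le> K / sqrt lmin" for k
    proof -
      have NK: "N k (z k - s0) \<le> K" using K[of k] N0[of k "z k - s0"] by simp
      have "lmin * (norm (z k - s0))^2 \<le> q k (z k - s0)"
        using lb[of "z k - s0" k] by (simp only: power2_norm_eq_inner)
      also have "\<dots> = (N k (z k - s0))^2" by (simp only: Nsq)
      also have "\<dots> \<le> K^2" using NK N0[of k "z k - s0"] by (rule power_mono)
      finally have "(sqrt lmin * norm (z k - s0))^2 \<le> K^2"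
        using lam(1) by (simp add: power_mult_distrib)
      then have "sqrt lmin * norm (z k - s0) \<le> K"
        using K0 by (rule power2_le_imp_le)
      then show ?thesis using lam(1) by (simp add: pos_le_divide_eq mult.commute)
    qed
    then have "range z \<subseteq> cball s0 (K / sqrt lmin)"
      by (simp add: image_subset_iff dist_norm norm_minus_commute)
    then show ?thesis by (rule bounded_subset[OF bounded_cball])
  qed
  have nu0: "nu \<longlonglongrightarrow> 0" by (rule summable_LIMSEQ_zero[OF nu_summable])
  have eps0: "eps \<longlonglongrightarrow> 0" by (rule summable_LIMSEQ_zero[OF eps_summable])
  have resid: "(\<lambda>k. q k (z k - w k)) \<longlonglongrightarrow> 0"
  proof -
    define d where "d k = N k (z k - s0)" for k
    have "convergent d" using dconv[OF s0] by (simp add: d_def[abs_def])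
    then obtain L where L: "d \<longlonglongrightarrow> L" by (auto simp: convergent_def)
    have L0: "0 \<le> L" using L N0 by (intro LIMSEQ_le_const[OF L]) (auto simp: d_def)
    define r where "r k = max 0 (d (Suc k) / (1 + nu k) - eps k)" for k
    have rL: "r \<longlonglongrightarrow> max 0 (L / (1 + 0) - 0)"
      unfolding r_def
      by (intro tendsto_intros LIMSEQ_Suc[OF L] nu0 eps0) simp
    then have rL': "r \<longlonglongrightarrow> L" using L0 by simp
    have rle: "r k \<le> N k (w k - s0)" for k
    proof -
      have pos: "0 < 1 + nu k" using nu_nonneg[of k] by simp
      have "d (Suc k) \<le> (1 + nu k) * (N k (w k - s0) + eps k)" using F4a[of k s0] by (simp add: d_def)
      then have "d (Suc k) / (1 + nu k) \<le> N k (w k - s0) + eps k"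
        using pos by (simp add: divide_le_eq mult.commute)
      then show ?thesis using N0[of k "w k - s0"] by (simp add: r_def)
    qed
    have r0: "0 \<le> r k" for k by (simp add: r_def)
    have up: "q k (z k - w k) \<le> (d k)^2 - (r k)^2" for k
    proof -
      have "(r k)^2 \<le> (N k (w k - s0))^2" using rle[of k] r0[of k] by (rule power_mono)
      then show ?thesis using F2'[OF s0, of k] by (simp add: d_def Nsq)
    qed
    have "(\<lambda>k. (d k)^2 - (r k)^2) \<longlonglongrightarrow> L^2 - L^2"
      by (intro tendsto_intros L rL')
    then have lim0: "(\<lambda>k. (d k)^2 - (r k)^2) \<longlonglongrightarrow> 0" by simp
    show ?thesis
      by (rule tendsto_sandwich[OF _ _ tendsto_const lim0]) (auto simp: q0 up)
  qed
  obtain cmin where cmin: "0 < cmin" "\<And>k. cmin \<le> c k" using c_away by blast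
  have "limsup (\<lambda>k. ereal (lambda_max (M k))) < ereal (linf + 1)" using M_limsup by simp
  from Limsup_lessD[OF this] have ev: "eventually (\<lambda>k. lambda_max (M k) < linf + 1) sequentially"
    by simp
  have linf0: "0 < linf + 1" using lam by simp
  have qbound: "q k x \<le> (linf + 1) * (norm x)^2" if "lambda_max (M k) < linf + 1" for k x
  proof -
    have "q k x \<le> lambda_max (M k) * (x \<bullet> x)" unfolding q_def by (rule lmax_bound[OF sa])
    also have "\<dots> \<le> (linf + 1) * (x \<bullet> x)" using that by (intro mult_right_mono) auto
    finally show ?thesis by (simp add: power2_norm_eq_inner)
  qed
  have normle: "norm x \<le> sqrt (q k x / lmin)" for k x
  proof -
    have "lmin * (norm x)^2 \<le> q k x" using lb[of x k] by (simp add: power2_norm_eq_inner)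
    then have "(norm x)^2 \<le> q k x / lmin" using lam(1) by (simp add: pos_le_divide_eq mult.commute)
    then show ?thesis by (simp add: real_le_rsqrt)
  qed
  have zw: "(\<lambda>k. z k - w k) \<longlonglongrightarrow> 0"
  proof -
    have "(\<lambda>k. sqrt (q k (z k - w k) / lmin)) \<longlonglongrightarrow> sqrt (0 / lmin)"
      using lam(1) by (intro tendsto_intros resid) auto
    then have lim1: "(\<lambda>k. sqrt (q k (z k - w k) / lmin)) \<longlonglongrightarrow> 0" by simp
    have "(\<lambda>k. norm (z k - w k)) \<longlonglongrightarrow> 0"
      by (rule tendsto_sandwich[OF _ _ tendsto_const lim1]) (auto simp: normle)
    then show ?thesis by (simp add: tendsto_norm_zero_iff)
  qed
  have vlim: "v \<longlonglongrightarrow> 0"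
  proof -
    have "(\<lambda>k. sqrt ((linf + 1) * q k (z k - w k)) / cmin) \<longlonglongrightarrow> sqrt ((linf + 1) * 0) / cmin"
      by (intro tendsto_intros resid) (use cmin in simp)
    then have lim: "(\<lambda>k. sqrt ((linf + 1) * q k (z k - w k)) / cmin) \<longlonglongrightarrow> 0" by simp
    have "eventually (\<lambda>k. norm (v k) \<le> sqrt ((linf + 1) * q k (z k - w k)) / cmin) sequentially"
      using ev
    proof eventually_elim
      case (elim k)
      have "(norm (M k (z k - w k)))^2 \<le> lambda_max (M k) * q k (z k - w k)"
        unfolding q_def by (rule Mx_bound[OF sa])
      also have "\<dots> \<le> (linf + 1) * q k (z k - w k)" using elim q0 by (intro mult_right_mono) auto
      finally have A: "norm (M k (z k - w k)) \<le> sqrt ((linf + 1) * q k (z k - w k))"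
        by (simp add: real_le_rsqrt)
      have "norm (v k) = norm (M k (z k - w k)) / c k"
        using cv[of k] c_pos[of k] by (metis norm_scaleR abs_of_pos nonzero_mult_div_cancel_left less_irrefl)
      also have "\<dots> \<le> norm (M k (z k - w k)) / cmin"
        using cmin c_pos[of k] by (intro divide_left_mono) auto
      also have "\<dots> \<le> sqrt ((linf + 1) * q k (z k - w k)) / cmin"
        using A cmin by (intro divide_right_mono) auto
      finally show ?case .
    qed
    then have "(\<lambda>k. norm (v k)) \<longlonglongrightarrow> 0"
      by (intro tendsto_sandwich[OF _ _ tendsto_const lim]) auto
    then show ?thesis by (simp add: tendsto_norm_zero_iff)
  qed
  obtain l r where r: "strict_mono r" and zr: "(z \<circ> r) \<longlonglongrightarrow> l"
    using bounded_imp_convergent_subsequence[OF bdd] by blast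
  have wr: "(\<lambda>j. w (r j)) \<longlonglongrightarrow> l"
  proof -
    have "(\<lambda>j. z (r j) - (z (r j) - w (r j))) \<longlonglongrightarrow> l - 0"
      using zr LIMSEQ_subseq_LIMSEQ[OF zw r] by (intro tendsto_diff) (auto simp: o_def)
    then show ?thesis by simp
  qed
  have vr: "(\<lambda>j. v (r j)) \<longlonglongrightarrow> 0"
    using LIMSEQ_subseq_LIMSEQ[OF vlim r] by (simp add: o_def)
  have "\<forall>y u. u \<in> T y \<longrightarrow> 0 \<le> (l - y) \<bullet> (0 - u)"
  proof (intro allI impI)
    fix y u assume "u \<in> T y"
    have "(\<lambda>j. (w (r j) - y) \<bullet> (v (r j) - u)) \<longlonglongrightarrow> (l - y) \<bullet> (0 - u)"
      by (intro tendsto_intros wr vr)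
    then show "0 \<le> (l - y) \<bullet> (0 - u)"
      by (rule LIMSEQ_le_const) (use monoT[OF v(1) \<open>u \<in> T y\<close>] in blast)
  qed
  then have lOm: "0 \<in> T l" using T_mm unfolding maximal_monotone_def by blast
  then have lOm': "l \<in> Om" by (simp add: Om_def)
  define d where "d k = N k (z k - l)" for k
  have "convergent d" using dconv[OF lOm'] by (simp add: d_def[abs_def])
  then obtain L where L: "d \<longlonglongrightarrow> L" by (auto simp: convergent_def)
  have d2: "(\<lambda>k. (d k)^2) \<longlonglongrightarrow> L^2" by (intro tendsto_intros L)
  have "(\<lambda>j. (d (r j))^2) \<longlonglongrightarrow> 0"
  proof (rule tendsto_sandwich[OF _ _ tendsto_const])
    show "eventually (\<lambda>j. 0 \<le> (d (r j))^2) sequentially" by simp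
    show "eventually (\<lambda>j. (d (r j))^2 \<le> (linf + 1) * (norm (z (r j) - l))^2) sequentially"
      using eventually_subseq[OF r ev]
      by eventually_elim (simp add: d_def Nsq qbound)
    have zr': "(\<lambda>j. z (r j)) \<longlonglongrightarrow> l" using zr by (simp add: o_def)
    have "(\<lambda>j. z (r j) - l) \<longlonglongrightarrow> l - l" by (rule tendsto_diff[OF zr' tendsto_const])
    then have "(\<lambda>j. (linf + 1) * (norm (z (r j) - l))^2) \<longlonglongrightarrow> (linf + 1) * (norm (l - l))^2"
      by (intro tendsto_mult[OF tendsto_const] tendsto_power tendsto_norm)
    then show "(\<lambda>j. (linf + 1) * (norm (z (r j) - l))^2) \<longlonglongrightarrow> 0" by simp
  qed
  moreover have "(\<lambda>j. (d (r j))^2) \<longlonglongrightarrow> L^2"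
    using LIMSEQ_subseq_LIMSEQ[OF d2 r] by (simp add: o_def)
  ultimately have "L^2 = 0" using LIMSEQ_unique by blast
  then have d20: "(\<lambda>k. (d k)^2) \<longlonglongrightarrow> 0" using d2 by simp
  have "(\<lambda>k. sqrt ((d k)^2 / lmin)) \<longlonglongrightarrow> sqrt (0 / lmin)" using lam(1) by (intro tendsto_intros d20) auto
  then have lim2: "(\<lambda>k. sqrt ((d k)^2 / lmin)) \<longlonglongrightarrow> 0" by simp
  have "(\<lambda>k. norm (z k - l)) \<longlonglongrightarrow> 0"
    by (rule tendsto_sandwich[OF _ _ tendsto_const lim2]) (auto simp: normle d_def Nsq)
  then have "z \<longlonglongrightarrow> l" by (simp add: tendsto_norm_zero_iff LIM_zero_iff)
  show ?thesis using bdd part2 \<open>z \<longlonglongrightarrow> l\<close> lOm by (auto simp: Om_def)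
qed

end
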